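(* Let $T>0$, $\epsilon>0$, $\delta\in(0,1)$, and let $\mathcal{R}$ consist of $M=\frac{12T}{n\epsilon^2}\ln\frac{2n}{\delta}$ independently generated random RR sets. Then with probability at least $1-\delta$ the following hold for every node $u\in V$: (1) if $I_u\ge T$, then $n\,\mathcal{F_R}(u)\ge T-\frac{\epsilon n}{2}$; (2) if $I_u<T-\epsilon n$, then $n\,\mathcal{F_R}(u)<T-\frac{\epsilon n}{2}$.
   Context: $G=\langle V,E,w\rangle$ is a network with $n=|V|$ under the Linear Threshold or Independent Cascade model (given by its live-edge distribution: LT — each node $v$ independently selects at most one incoming live edge, $(u,v)$ with probability $w_{uv}/W_v$ where $W_v=w_v+\sum_{u}w_{uv}$ includes a self-weight $w_v$; IC — each edge $(u,v)$ is live independently with probability $w_{uv}$). The influence spread $I(S)$ is the expected number of nodes reachable from $S$ via live edges, and $I_u=I(\{u\})$. A random RR set is the set of nodes that can reach a uniformly random node $v\in V$ via live edges in a freshly sampled live-edge graph. $\mathcal{F_R}(u)$ is the fraction of RR sets in $\mathcal{R}$ that contain $u$. *)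

theory Defs
  imports "HOL-Probability.Probability"
begin

(* Nodes have type 'a; the network's node set is a finite set V.
   A live-edge graph is a set of directed edges L :: ('a * 'a) set. *)

definition reach :: "'a set \<Rightarrow> ('a \<times> 'a) set \<Rightarrow> 'a set \<Rightarrow> 'a set" where
  "reach V L S = {v \<in> V. \<exists>u\<in>S. (u, v) \<in> L\<^sup>*}"

definition IC_dist :: "'a set \<Rightarrow> ('a \<Rightarrow> 'a \<Rightarrow> real) \<Rightarrow> ('a \<times> 'a) set pmf" where
  "IC_dist V w =
     map_pmf (\<lambda>f. {e \<in> {(u, v). u \<in> V \<and> v \<in> V \<and> u \<noteq> v}. f e})
       (Pi_pmf {(u, v). u \<in> V \<and> v \<in> V \<and> u \<noteq> v} False
          (\<lambda>(u, v). bernoulli_pmf (w u v)))"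

definition LT_total :: "'a set \<Rightarrow> ('a \<Rightarrow> 'a \<Rightarrow> real) \<Rightarrow> ('a \<Rightarrow> real) \<Rightarrow> 'a \<Rightarrow> real" where
  "LT_total V w ws v = ws v + (\<Sum>u\<in>V - {v}. w u v)"

text \<open>LT model: node v picks in-neighbour u with probability w_uv / W_v and
  no incoming live edge with probability w_v / W_v.\<close>
definition LT_choice :: "'a set \<Rightarrow> ('a \<Rightarrow> 'a \<Rightarrow> real) \<Rightarrow> ('a \<Rightarrow> real) \<Rightarrow> 'a \<Rightarrow> 'a option pmf" where
  "LT_choice V w ws v = embed_pmf (\<lambda>x. case x of
       None \<Rightarrow> ws v / LT_total V w ws v
     | Some u \<Rightarrow> (if u \<in> V \<and> u \<noteq> v then w u v / LT_total V w ws v else 0))"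

definition LT_dist :: "'a set \<Rightarrow> ('a \<Rightarrow> 'a \<Rightarrow> real) \<Rightarrow> ('a \<Rightarrow> real) \<Rightarrow> ('a \<times> 'a) set pmf" where
  "LT_dist V w ws =
     map_pmf (\<lambda>f. {(u, v). v \<in> V \<and> f v = Some u}) (Pi_pmf V None (LT_choice V w ws))"

definition IC_weights :: "'a set \<Rightarrow> ('a \<Rightarrow> 'a \<Rightarrow> real) \<Rightarrow> bool" where
  "IC_weights V w \<longleftrightarrow> (\<forall>u\<in>V. \<forall>v\<in>V. 0 \<le> w u v \<and> w u v \<le> 1)"

definition LT_weights :: "'a set \<Rightarrow> ('a \<Rightarrow> 'a \<Rightarrow> real) \<Rightarrow> ('a \<Rightarrow> real) \<Rightarrow> bool" where
  "LT_weights V w ws \<longleftrightarrow> (\<forall>u\<in>V. \<forall>v\<in>V. 0 \<le> w u v) \<and> (\<forall>v\<in>V. 0 \<le> ws v \<and> 0 < LT_total V w ws v)"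

definition influence :: "'a set \<Rightarrow> ('a \<times> 'a) set pmf \<Rightarrow> 'a set \<Rightarrow> real" where
  "influence V D S = measure_pmf.expectation D (\<lambda>L. real (card (reach V L S)))"

definition RR_pmf :: "'a set \<Rightarrow> ('a \<times> 'a) set pmf \<Rightarrow> 'a set pmf" where
  "RR_pmf V D = do { v \<leftarrow> pmf_of_set V; L \<leftarrow> D; return_pmf {u \<in> V. (u, v) \<in> L\<^sup>*} }"

definition RR_collection :: "'a set \<Rightarrow> ('a \<times> 'a) set pmf \<Rightarrow> nat \<Rightarrow> (nat \<Rightarrow> 'a set) pmf" where
  "RR_collection V D M = Pi_pmf {..<M} {} (\<lambda>_. RR_pmf V D)"

definition frac_cover :: "nat \<Rightarrow> (nat \<Rightarrow> 'a set) \<Rightarrow> 'a \<Rightarrow> real" where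
  "frac_cover M R u = real (card {i \<in> {..<M}. u \<in> R i}) / real M"

end

theory Submission
  imports Defs
begin

lemma RR_prob:
  assumes fin: "finite V" and ne: "V \<noteq> {}" and u: "u \<in> V"
  shows "measure_pmf.prob (RR_pmf V D) {S. u \<in> S} = influence V D {u} / real (card V)"
proof -
  let ?g = "\<lambda>v L. {u \<in> V. (u, v) \<in> L\<^sup>*}"
  have RR: "RR_pmf V D = pmf_of_set V \<bind> (\<lambda>v. map_pmf (?g v) D)"
    unfolding RR_pmf_def map_pmf_def by simp
  have "emeasure (measure_pmf (RR_pmf V D)) {S. u \<in> S}
        = (\<Sum>v\<in>V. emeasure (measure_pmf D) {L. (u, v) \<in> L\<^sup>*}) / card V"
    unfolding RR using fin ne u
    by (simp add: nn_integral_pmf_of_set vimage_def)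
  also have "\<dots> = ennreal ((\<Sum>v\<in>V. measure_pmf.prob D {L. (u, v) \<in> L\<^sup>*}) / card V)"
    using fin ne by (simp add: measure_pmf.emeasure_eq_measure sum_ennreal ennreal_of_nat_eq_real_of_nat,
        intro divide_ennreal) (auto intro: sum_nonneg simp: card_gt_0_iff)
  finally have e: "measure_pmf.prob (RR_pmf V D) {S. u \<in> S} = (\<Sum>v\<in>V. measure_pmf.prob D {L. (u, v) \<in> L\<^sup>*}) / card V"
    by (simp add: measure_pmf.emeasure_eq_measure sum_nonneg divide_nonneg_nonneg)
  have "(\<Sum>v\<in>V. measure_pmf.prob D {L. (u, v) \<in> L\<^sup>*})
      = (\<Sum>v\<in>V. measure_pmf.expectation D (indicator {L. (u, v) \<in> L\<^sup>*}))"
    by simp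
  also have "\<dots> = measure_pmf.expectation D (\<lambda>L. \<Sum>v\<in>V. indicator {L. (u, v) \<in> L\<^sup>*} L)"
    by (rule Bochner_Integration.integral_sum[symmetric]) (auto intro!: integrable_real_indicator simp: measure_pmf.emeasure_eq_measure)
  also have "\<dots> = influence V D {u}"
    unfolding influence_def reach_def
    by (intro Bochner_Integration.integral_cong refl)
       (simp add: indicator_def of_bool_def sum.If_cases fin Int_def)
  finally show ?thesis using e by simp
qed


lemma card_exp_prod:
  fixes M :: nat
  shows "exp (l * real (card {i\<in>{..<M}. u \<in> R i})) = (\<Prod>i\<in>{..<M}. exp (l * (if u \<in> R i then 1 else 0)))"
proof -
  have "real (card {i\<in>{..<M}. u \<in> R i}) = (\<Sum>i\<in>{..<M}. (if u \<in> R i then 1 else 0))"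
  proof -
    have "real (card {i\<in>{..<M}. u \<in> R i}) = (\<Sum>i\<in>{i\<in>{..<M}. u \<in> R i}. 1)" by simp
    also have "\<dots> = (\<Sum>i\<in>{..<M}. (if u \<in> R i then 1 else 0))"
      by (rule sum.inter_filter) simp
    finally show ?thesis .
  qed
  then show ?thesis by (simp add: sum_distrib_left exp_sum)
qed

lemma mgf:
  fixes M :: nat
  shows "measure_pmf.expectation (Pi_pmf {..<M} {} (\<lambda>_. P)) (\<lambda>R. exp (l * real (card {i\<in>{..<M}. u \<in> R i})))
     = (1 + (exp l - 1) * measure_pmf.prob P {S. u \<in> S}) ^ M"
proof -
  have e1: "measure_pmf.expectation P (\<lambda>S. exp (l * (if u \<in> S then 1 else 0)))
        = 1 + (exp l - 1) * measure_pmf.prob P {S. u \<in> S}"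
  proof -
    have "(\<lambda>S. exp (l * (if u \<in> S then 1 else 0))) = (\<lambda>S. 1 + (exp l - 1) * indicator {S. u \<in> S} S)"
      by (auto simp: indicator_def)
    then show ?thesis
      by (simp add: measure_pmf.emeasure_eq_measure)
  qed
  have int: "integrable (measure_pmf P) (\<lambda>S. exp (l * (if u \<in> S then 1 else 0)))"
    by (rule measure_pmf.integrable_const_bound[where B="exp \<bar>l\<bar>"]) auto
  show ?thesis
    unfolding card_exp_prod
    by (subst expectation_prod_Pi_pmf) (auto simp: e1 int)
qed

lemma pmf_markov:
  fixes g :: "'b \<Rightarrow> real"
  assumes "\<And>x. 0 \<le> g x" "\<And>x. g x \<le> B" "c > 0"
  shows "measure_pmf.prob Q {x. c \<le> g x} \<le> measure_pmf.expectation Q g / c"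
proof -
  have "integrable (measure_pmf Q) g"
    by (rule measure_pmf.integrable_const_bound[where B=B]) (use assms in auto)
  from integral_Markov_inequality_measure[OF this, of UNIV c] assms show ?thesis by simp
qed



lemma exp_neg_le: fixes l :: real assumes "0 \<le> l" shows "exp (-l) \<le> 1 - l + l\<^sup>2/2"
proof -
  let ?f = "\<lambda>x::real. 1 - x + x\<^sup>2/2 - exp (-x)"
  have "?f 0 \<le> ?f l"
  proof (rule DERIV_nonneg_imp_nondecreasing[OF assms])
    fix x :: real assume "0 \<le> x" "x \<le> l"
    have "DERIV ?f x :> (- 1 + x + exp (-x))"
      by (auto intro!: derivative_eq_intros simp: power2_eq_square)
    moreover have "0 \<le> - 1 + x + exp (-x)" using exp_ge_add_one_self[of "-x"] by linarith
    ultimately show "\<exists>y. DERIV ?f x :> y \<and> 0 \<le> y" by blast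
  qed
  then show ?thesis by simp
qed

lemma ln_bound2: fixes y :: real assumes "0 \<le> y" "y < 1" shows "y + y\<^sup>2/2 \<le> - ln (1 - y)"
proof -
  let ?f = "\<lambda>x::real. - ln (1 - x) - x - x\<^sup>2/2"
  have "?f 0 \<le> ?f y"
  proof (rule DERIV_nonneg_imp_nondecreasing[OF assms(1)])
    fix x :: real assume x: "0 \<le> x" "x \<le> y"
    then have "x < 1" using assms by linarith
    have "DERIV ?f x :> (1/(1-x) - 1 - x)"
      using \<open>x < 1\<close> by (auto intro!: derivative_eq_intros simp: power2_eq_square field_simps)
    moreover have "0 \<le> 1/(1-x) - 1 - x"
    proof -
      have "1/(1-x) - 1 - x = x\<^sup>2/(1-x)" using \<open>x<1\<close> by (simp add: field_simps power2_eq_square)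
      then show ?thesis using \<open>x<1\<close> by simp
    qed
    ultimately show "\<exists>y. DERIV ?f x :> y \<and> 0 \<le> y" by blast
  qed
  then show ?thesis by simp
qed

lemma pow_le_exp: fixes x :: real assumes "-1 \<le> x" shows "(1 + x) ^ M \<le> exp (real M * x)"
proof -
  have "(1 + x) ^ M \<le> exp x ^ M"
    by (rule power_mono) (use assms exp_ge_add_one_self[of x] in auto)
  then show ?thesis by (simp add: exp_of_nat_mult)
qed

context
  fixes P :: "'a set pmf" and u :: 'a and M :: nat
begin

definition "Q = Pi_pmf {..<M} {} (\<lambda>_. P)"
definition "p = measure_pmf.prob P {S. u \<in> S}"
definition "C R = real (card {i\<in>{..<M}. u \<in> R i})"

lemma C_bounds: "0 \<le> C R" "C R \<le> M"
proof -
  have "card {i\<in>{..<M}. u \<in> R i} \<le> card {..<M}" by (rule card_mono) auto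
  then show "C R \<le> M" unfolding C_def by simp
qed (simp add: C_def)

lemma upper_gen:
  assumes "0 \<le> l"
  shows "measure_pmf.prob Q {R. c \<le> C R} \<le> (1 + (exp l - 1) * p) ^ M / exp (l * c)"
proof -
  have "measure_pmf.prob Q {R. c \<le> C R} \<le> measure_pmf.prob Q {R. exp (l * c) \<le> exp (l * C R)}"
    by (rule measure_pmf.finite_measure_mono) (auto intro: mult_left_mono assms)
  also have "\<dots> \<le> measure_pmf.expectation Q (\<lambda>R. exp (l * C R)) / exp (l * c)"
  proof (rule pmf_markov)
    fix R show "exp (l * C R) \<le> exp (l * M)"
      using C_bounds[of R] assms by (auto intro: mult_left_mono)
  qed auto
  also have "\<dots> = (1 + (exp l - 1) * p) ^ M / exp (l * c)"
    unfolding Q_def C_def p_def by (subst mgf) simp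
  finally show ?thesis .
qed

lemma lower_gen:
  assumes "0 \<le> l"
  shows "measure_pmf.prob Q {R. C R \<le> c} \<le> (1 + (exp (-l) - 1) * p) ^ M / exp (-l * c)"
proof -
  have "measure_pmf.prob Q {R. C R \<le> c} \<le> measure_pmf.prob Q {R. exp (-l * c) \<le> exp (-l * C R)}"
    by (rule measure_pmf.finite_measure_mono) (auto intro: mult_left_mono assms)
  also have "\<dots> \<le> measure_pmf.expectation Q (\<lambda>R. exp (-l * C R)) / exp (-l * c)"
  proof (rule pmf_markov)
    fix R show "exp (-l * C R) \<le> 1"
      using C_bounds[of R] assms by (auto simp: mult_nonneg_nonneg)
  qed auto
  also have "\<dots> = (1 + (exp (-l) - 1) * p) ^ M / exp (-l * c)"
    unfolding Q_def C_def p_def by (subst mgf) simp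
  finally show ?thesis .
qed

end


lemma p_bounds: "0 \<le> p P u" "p P u \<le> 1"
  unfolding p_def by auto

lemma lower_tail:
  assumes "0 < a" "a < p P u"
  shows "measure_pmf.prob (Q P M) {R. C u M R \<le> M * a} \<le> exp (- real M * (p P u - a)\<^sup>2 / (2 * p P u))"
proof -
  define q where "q = p P u"
  have q: "0 < q" "q \<le> 1" using assms p_bounds[of P u] by (auto simp: q_def)
  define l where "l = (q - a) / q"
  have l: "0 \<le> l" using q assms by (simp add: l_def q_def)
  have "measure_pmf.prob (Q P M) {R. C u M R \<le> M * a} \<le> (1 + (exp (-l) - 1) * q) ^ M / exp (-l * (M * a))"
    unfolding q_def by (rule lower_gen[OF l])
  also have "\<dots> \<le> exp (M * ((exp (-l) - 1) * q)) / exp (-l * (M * a))"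
  proof (rule divide_right_mono[OF pow_le_exp])
    have "exp (-l) - 1 \<ge> -1" by simp
    moreover have "exp (-l) - 1 \<le> 0" using l by simp
    moreover have "exp (-l) - 1 \<le> (exp (-l) - 1) * q"
      using mult_left_mono_neg[of q 1 "exp (-l) - 1"] q \<open>exp (-l) - 1 \<le> 0\<close> by simp
    ultimately show "-1 \<le> (exp (-l) - 1) * q" by linarith
  qed simp
  also have "\<dots> = exp (M * ((exp (-l) - 1) * q) - (-l * (M * a)))"
    by (rule exp_diff[symmetric])
  also have "M * ((exp (-l) - 1) * q) - (-l * (M * a)) = M * ((exp (-l) - 1) * q + l * a)"
    by (simp add: distrib_left)
  also have "exp (M * ((exp (-l) - 1) * q + l * a)) \<le> exp (M * ((- l + l\<^sup>2/2) * q + l * a))"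
  proof -
    have "(exp (-l) - 1) * q \<le> (- l + l\<^sup>2/2) * q"
      using exp_neg_le[OF l] q by (intro mult_right_mono) auto
    then show ?thesis by (intro exp_mono mult_left_mono) auto
  qed
  also have "(- l + l\<^sup>2/2) * q + l * a = - (q - a)\<^sup>2 / (2 * q)"
    using q by (simp add: l_def field_simps power2_eq_square)
  finally show ?thesis by (simp add: q_def)
qed

lemma upper_tail:
  assumes "0 < a" "p P u < a"
  shows "measure_pmf.prob (Q P M) {R. M * a \<le> C u M R} \<le> exp (- real M * (a - p P u)\<^sup>2 / (2 * a))"
proof (cases "p P u = 0")
  case True
  have "measure_pmf.prob (Q P M) {R. M * a \<le> C u M R} \<le> (1 + (exp (1/2) - 1) * p P u) ^ M / exp (1/2 * (M * a))"
    by (rule upper_gen) simp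
  also have "\<dots> = exp (- real M * (a - p P u)\<^sup>2 / (2 * a))"
    using True assms by (simp add: power2_eq_square exp_minus field_simps)
  finally show ?thesis .
next
  case False
  define q where "q = p P u"
  have q: "0 < q" "q < a" using assms p_bounds[of P u] False by (auto simp: q_def)
  define l where "l = ln (a / q)"
  have el: "exp l = a / q" using q assms by (simp add: l_def)
  have l: "0 \<le> l" using q assms by (simp add: l_def)
  have "measure_pmf.prob (Q P M) {R. M * a \<le> C u M R} \<le> (1 + (exp l - 1) * q) ^ M / exp (l * (M * a))"
    unfolding q_def by (rule upper_gen[OF l])
  also have "\<dots> \<le> exp (M * ((exp l - 1) * q)) / exp (l * (M * a))"
  proof (rule divide_right_mono[OF pow_le_exp])
    show "-1 \<le> (exp l - 1) * q" using q el by (simp add: field_simps)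
  qed simp
  also have "\<dots> = exp (M * ((exp l - 1) * q) - l * (M * a))"
    by (rule exp_diff[symmetric])
  also have "M * ((exp l - 1) * q) - l * (M * a) = M * ((a - q) - a * l)"
    using q el by (simp add: field_simps)
  also have "exp (M * ((a - q) - a * l)) \<le> exp (- real M * (a - q)\<^sup>2 / (2 * a))"
  proof -
    define y where "y = 1 - q / a"
    have y: "0 \<le> y" "y < 1" using q assms by (auto simp: y_def)
    have "l = - ln (1 - y)" using q assms
      by (simp add: l_def y_def ln_div)
    then have "y + y\<^sup>2/2 \<le> l" using ln_bound2[OF y] by simp
    then have "a * (y + y\<^sup>2/2) \<le> a * l" using assms by simp
    moreover have "a * (y + y\<^sup>2/2) = (a - q) + (a - q)\<^sup>2 / (2 * a)"
      using assms by (simp add: y_def field_simps power2_eq_square)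
    ultimately have "(a - q) - a * l \<le> - (a - q)\<^sup>2 / (2 * a)" by linarith
    then have "M * ((a - q) - a * l) \<le> M * (- (a - q)\<^sup>2 / (2 * a))"
      by (intro mult_left_mono) auto
    then show ?thesis by simp
  qed
  finally show ?thesis by (simp add: q_def)
qed



lemma final_exp:
  fixes T \<epsilon> L E :: real and n M :: nat
  assumes "real M \<ge> 12*T/(n*\<epsilon>\<^sup>2) * L" "L \<ge> 0" "E \<ge> \<epsilon>\<^sup>2*n/(8*T)" "T>0" "\<epsilon>>0" "n>0"
  shows "exp (- real M * E) \<le> exp (- L)"
proof -
  have "real M * E \<ge> 12*T/(n*\<epsilon>\<^sup>2) * L * (\<epsilon>\<^sup>2*n/(8*T))"
    using assms by (intro mult_mono) auto
  also have "12*T/(n*\<epsilon>\<^sup>2) * L * (\<epsilon>\<^sup>2*n/(8*T)) = 3/2 * L"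
    using assms by (simp add: field_simps)
  finally show ?thesis using assms by simp
qed

lemma ratio_mono:
  fixes p t a :: real
  assumes "0 < a" "a \<le> t" "t \<le> p"
  shows "(t - a)\<^sup>2 / t \<le> (p - a)\<^sup>2 / p"
proof -
  have "(p - a)\<^sup>2 * t - (t - a)\<^sup>2 * p = (p - t) * (p * t - a\<^sup>2)"
    by (simp add: algebra_simps power2_eq_square)
  moreover have "a\<^sup>2 \<le> p * t"
    using assms by (simp add: power2_eq_square mult_mono)
  ultimately have "(t - a)\<^sup>2 * p \<le> (p - a)\<^sup>2 * t"
    using assms by (smt (verit) mult_nonneg_nonneg)
  then show ?thesis using assms by (simp add: divide_simps)
qed



theorem theorem5p3:
  fixes V :: "'a set" and w :: "'a \<Rightarrow> 'a \<Rightarrow> real" and ws :: "'a \<Rightarrow> real"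
    and D :: "('a \<times> 'a) set pmf" and T \<epsilon> \<delta> :: real and n M :: nat
  assumes "finite V" and "V \<noteq> {}" and "n = card V"
    and "(IC_weights V w \<and> D = IC_dist V w) \<or> (LT_weights V w ws \<and> D = LT_dist V w ws)"
    and "T > 0" and "\<epsilon> > 0" and "0 < \<delta>" and "\<delta> < 1"
    and "M = nat \<lceil>12 * T / (real n * \<epsilon>\<^sup>2) * ln (2 * real n / \<delta>)\<rceil>"
  shows "measure_pmf.prob (RR_collection V D M)
           {R. \<forall>u\<in>V.
                 (influence V D {u} \<ge> T \<longrightarrow> real n * frac_cover M R u \<ge> T - \<epsilon> * real n / 2) \<and>
                 (influence V D {u} < T - \<epsilon> * real n \<longrightarrow> real n * frac_cover M R u < T - \<epsilon> * real n / 2)}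
         \<ge> 1 - \<delta>"
proof -
  note fin = assms(1) and ne = assms(2) and nV = assms(3)
  have npos: "n > 0" using fin ne nV by (simp add: card_gt_0_iff)
  define L where "L = ln (2 * real n / \<delta>)"
  have L: "L > 0" unfolding L_def using npos assms(7,8) by (simp add: field_simps)
  have expL: "exp (- L) = \<delta> / (2 * n)" unfolding L_def using npos assms(7)
    by (simp add: exp_minus)
  define x where "x = 12 * T / (real n * \<epsilon>\<^sup>2) * L"
  have xpos: "x > 0" unfolding x_def using L npos assms(5,6) by simp
  have Mx: "real M \<ge> x" using assms(9) unfolding x_def L_def by linarith
  have Mpos: "M > 0" using Mx xpos by linarith
  define P where "P = RR_pmf V D"
  have RRc: "RR_collection V D M = Q P M" unfolding RR_collection_def Q_def P_def ..
  define I where "I u = influence V D {u}" for u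
  have pI: "p P u = I u / n" if "u \<in> V" for u
    unfolding p_def P_def I_def using RR_prob[OF fin ne that] nV by simp
  define t where "t = T / n"
  have tpos: "t > 0" unfolding t_def using npos assms(5) by simp
  define a where "a = t - \<epsilon> / 2"
  have frac: "real n * frac_cover M R u = n * C u M R / M" for R u
    unfolding frac_cover_def C_def by simp
  have lt_iff: "real n * frac_cover M R u < T - \<epsilon> * real n / 2 \<longleftrightarrow> C u M R < M * a" for R u
  proof -
    have e1: "real n * frac_cover M R u < T - \<epsilon> * real n / 2 \<longleftrightarrow> n * C u M R < M * (T - \<epsilon> * real n / 2)"
      unfolding frac using Mpos by (simp add: pos_divide_less_eq mult.commute)
    have e2: "M * (T - \<epsilon> * real n / 2) = n * (M * a)"
      unfolding a_def t_def using npos by (simp add: field_simps)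
    show ?thesis unfolding e1 e2 using npos by simp
  qed
  define B where "B u = {R. (I u \<ge> T \<and> real n * frac_cover M R u < T - \<epsilon> * real n / 2) \<or>
                         (I u < T - \<epsilon> * real n \<and> \<not> real n * frac_cover M R u < T - \<epsilon> * real n / 2)}" for u
  have Bbound: "measure_pmf.prob (Q P M) (B u) \<le> \<delta> / (2 * n)" if u: "u \<in> V" for u
  proof -
    consider "I u \<ge> T" | "I u < T - \<epsilon> * real n" | "\<not> I u \<ge> T" "\<not> I u < T - \<epsilon> * real n" by linarith
    then show ?thesis
    proof cases
      case 1
      have "T - \<epsilon> * real n < T" using assms(6) npos by simp
      then have Beq: "B u = {R. C u M R < M * a}" unfolding B_def using 1 \<open>T - \<epsilon> * real n < T\<close> by (auto simp: lt_iff)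
      show ?thesis
      proof (cases "a > 0")
        case False
        have "B u = {}" 
        proof -
          have "real M * a \<le> 0" using False by (simp add: mult_nonneg_nonpos)
          then show ?thesis unfolding Beq using C_bounds(1)[of u M] by (auto simp: not_less intro: order_trans)
        qed
        then show ?thesis using assms(7) npos by simp
      next
        case True
        have pt: "t \<le> p P u" using pI[OF u] 1 npos unfolding t_def by (simp add: divide_right_mono)
        have at: "a \<le> t" "a < p P u" unfolding a_def using assms(6) pt by auto
        have "measure_pmf.prob (Q P M) (B u) \<le> measure_pmf.prob (Q P M) {R. C u M R \<le> M * a}"
          unfolding Beq by (rule measure_pmf.finite_measure_mono) auto
        also have "\<dots> \<le> exp (- real M * ((p P u - a)\<^sup>2 / (2 * p P u)))"
          using lower_tail[OF True at(2)] by simp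
        also have "\<dots> \<le> exp (- L)"
        proof (rule final_exp[where T=T and \<epsilon>=\<epsilon> and n=n])
          have "(t - a)\<^sup>2 / t \<le> (p P u - a)\<^sup>2 / p P u" by (rule ratio_mono[OF True at(1) pt])
          moreover have "(t - a)\<^sup>2 / t = \<epsilon>\<^sup>2 * n / (4 * T)"
            unfolding a_def t_def using npos assms(5) by (simp add: field_simps power2_eq_square)
          ultimately show "\<epsilon>\<^sup>2 * n / (8 * T) \<le> (p P u - a)\<^sup>2 / (2 * p P u)" by simp
        qed (use Mx[unfolded x_def] L npos assms(5,6) in auto)
        finally show ?thesis using expL by simp
      qed
    next
      case 2
      have "\<not> (I u \<ge> T)" using 2 assms(6) npos by (smt (verit) mult_pos_pos of_nat_0_less_iff)
      then have Beq: "B u = {R. M * a \<le> C u M R}" unfolding B_def using 2 by (auto simp: lt_iff not_less)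
      have p0: "0 \<le> p P u" by (rule p_bounds)
      have pa: "p P u < t - \<epsilon>" using pI[OF u] 2 npos unfolding t_def by (simp add: field_simps)
      have apos: "a > 0" unfolding a_def using pa p0 assms(6) by simp
      have "measure_pmf.prob (Q P M) (B u) \<le> exp (- real M * ((a - p P u)\<^sup>2 / (2 * a)))"
        unfolding Beq using upper_tail[OF apos, of P u M] pa a_def assms(6) by simp
      also have "\<dots> \<le> exp (- L)"
      proof (rule final_exp[where T=T and \<epsilon>=\<epsilon> and n=n])
        have "\<epsilon> / 2 \<le> a - p P u" using pa a_def by simp
        then have "(\<epsilon> / 2)\<^sup>2 \<le> (a - p P u)\<^sup>2" using assms(6) by (intro power_mono) auto
        moreover have "2 * a \<le> 2 * t" unfolding a_def using assms(6) by simp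
        ultimately have "(\<epsilon> / 2)\<^sup>2 / (2 * t) \<le> (a - p P u)\<^sup>2 / (2 * a)"
          using apos by (intro frac_le) auto
        moreover have "(\<epsilon> / 2)\<^sup>2 / (2 * t) = \<epsilon>\<^sup>2 * n / (8 * T)"
          unfolding t_def using npos assms(5) by (simp add: field_simps power2_eq_square)
        ultimately show "\<epsilon>\<^sup>2 * n / (8 * T) \<le> (a - p P u)\<^sup>2 / (2 * a)" by simp
      qed (use Mx[unfolded x_def] L npos assms(5,6) in auto)
      finally show ?thesis using expL by simp
    next
      case 3
      then have "B u = {}" unfolding B_def by auto
      then show ?thesis using assms(7) npos by simp
    qed
  qed
  have union: "measure_pmf.prob (Q P M) (\<Union>u\<in>V. B u) \<le> (\<Sum>u\<in>V. measure_pmf.prob (Q P M) (B u))"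
    by (rule measure_pmf.finite_measure_subadditive_finite) (use fin in auto)
  also have "\<dots> \<le> (\<Sum>u\<in>V. \<delta> / (2 * n))" by (rule sum_mono) (rule Bbound)
  also have "\<dots> = \<delta> / 2" using nV npos by simp
  finally have U: "measure_pmf.prob (Q P M) (\<Union>u\<in>V. B u) \<le> \<delta> / 2" .
  have good: "{R. \<forall>u\<in>V.
                 (influence V D {u} \<ge> T \<longrightarrow> real n * frac_cover M R u \<ge> T - \<epsilon> * real n / 2) \<and>
                 (influence V D {u} < T - \<epsilon> * real n \<longrightarrow> real n * frac_cover M R u < T - \<epsilon> * real n / 2)}
        = space (measure_pmf (Q P M)) - (\<Union>u\<in>V. B u)"
    unfolding B_def I_def by (auto simp: not_less)
  have "measure_pmf.prob (Q P M) (space (measure_pmf (Q P M)) - (\<Union>u\<in>V. B u)) = 1 - measure_pmf.prob (Q P M) (\<Union>u\<in>V. B u)"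
    by (rule measure_pmf.prob_compl) auto
  then show ?thesis unfolding RRc good using U assms(7) by linarith
qed


end
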